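(* Among the grid graphs $P_m \Box P_n$ with $2 \leq m \leq n$, the only diametrical one is $P_2 \Box P_2$.
   Context: $P_k$ is the path on $k$ vertices and $\Box$ the Cartesian product of graphs. Let $G=(V,E)$ be a finite connected graph with distance $d(u,v)$, eccentricity $e(v)=\max_w d(v,w)$ and diameter $\mathrm{diam}(G)=\max_v e(v)$. A broadcast is a function $f: V\to\{0,\dots,\mathrm{diam}(G)\}$ with $f(v)\le e(v)$; its cost is $\sum_v f(v)$; it is dominating if every $u$ has some $v$ with $f(v)\ge 1$ and $d(u,v)\le f(v)$; a dominating broadcast is minimal if decreasing $f(v)$ for any $v$ with $f(v)>0$ destroys domination. $\Gamma_b(G)$ is the maximum cost of a minimal dominating broadcast, and $G$ is called diametrical if $\Gamma_b(G)=\mathrm{diam}(G)$. *)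

theory Defs
  imports Main
begin

definition is_walk :: "'a set \<Rightarrow> ('a \<Rightarrow> 'a \<Rightarrow> bool) \<Rightarrow> 'a list \<Rightarrow> bool" where
  "is_walk V E p \<longleftrightarrow> p \<noteq> [] \<and> set p \<subseteq> V \<and> (\<forall>i. Suc i < length p \<longrightarrow> E (p ! i) (p ! Suc i))"

definition gdist :: "'a set \<Rightarrow> ('a \<Rightarrow> 'a \<Rightarrow> bool) \<Rightarrow> 'a \<Rightarrow> 'a \<Rightarrow> nat" where
  "gdist V E u v = (LEAST k. \<exists>p. is_walk V E p \<and> hd p = u \<and> last p = v \<and> length p = Suc k)"

definition ecc :: "'a set \<Rightarrow> ('a \<Rightarrow> 'a \<Rightarrow> bool) \<Rightarrow> 'a \<Rightarrow> nat" where
  "ecc V E v = Max ((\<lambda>w. gdist V E v w) ` V)"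

definition diam :: "'a set \<Rightarrow> ('a \<Rightarrow> 'a \<Rightarrow> bool) \<Rightarrow> nat" where
  "diam V E = Max (ecc V E ` V)"

definition is_broadcast :: "'a set \<Rightarrow> ('a \<Rightarrow> 'a \<Rightarrow> bool) \<Rightarrow> ('a \<Rightarrow> nat) \<Rightarrow> bool" where
  "is_broadcast V E f \<longleftrightarrow> (\<forall>v\<in>V. f v \<le> diam V E \<and> f v \<le> ecc V E v)"

definition bcost :: "'a set \<Rightarrow> ('a \<Rightarrow> nat) \<Rightarrow> nat" where
  "bcost V f = (\<Sum>v\<in>V. f v)"

definition dominating :: "'a set \<Rightarrow> ('a \<Rightarrow> 'a \<Rightarrow> bool) \<Rightarrow> ('a \<Rightarrow> nat) \<Rightarrow> bool" where
  "dominating V E f \<longleftrightarrow> (\<forall>u\<in>V. \<exists>v\<in>V. f v \<ge> 1 \<and> gdist V E u v \<le> f v)"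

definition minimal_dominating_broadcast :: "'a set \<Rightarrow> ('a \<Rightarrow> 'a \<Rightarrow> bool) \<Rightarrow> ('a \<Rightarrow> nat) \<Rightarrow> bool" where
  "minimal_dominating_broadcast V E f \<longleftrightarrow>
     is_broadcast V E f \<and> dominating V E f \<and>
     (\<forall>v\<in>V. \<forall>k < f v. \<not> dominating V E (f(v := k)))"

definition upper_broadcast_number :: "'a set \<Rightarrow> ('a \<Rightarrow> 'a \<Rightarrow> bool) \<Rightarrow> nat" where
  "upper_broadcast_number V E =
     Max {bcost V f | f. minimal_dominating_broadcast V E f}"

definition diametrical :: "'a set \<Rightarrow> ('a \<Rightarrow> 'a \<Rightarrow> bool) \<Rightarrow> bool" where
  "diametrical V E \<longleftrightarrow> upper_broadcast_number V E = diam V E"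

definition path_V :: "nat \<Rightarrow> nat set" where "path_V k = {0..<k}"
definition path_E :: "nat \<Rightarrow> nat \<Rightarrow> bool" where "path_E i j \<longleftrightarrow> i + 1 = j \<or> j + 1 = i"

definition box_V :: "'a set \<Rightarrow> 'b set \<Rightarrow> ('a \<times> 'b) set" where "box_V V1 V2 = V1 \<times> V2"
definition box_E :: "('a \<Rightarrow> 'a \<Rightarrow> bool) \<Rightarrow> ('b \<Rightarrow> 'b \<Rightarrow> bool) \<Rightarrow> ('a \<times> 'b) \<Rightarrow> ('a \<times> 'b) \<Rightarrow> bool" where
  "box_E E1 E2 x y \<longleftrightarrow> (fst x = fst y \<and> E2 (snd x) (snd y)) \<or> (snd x = snd y \<and> E1 (fst x) (fst y))"

end

theory Submission
  imports Defs
begin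

definition dd :: "nat \<Rightarrow> nat \<Rightarrow> nat" where "dd a b = (a - b) + (b - a)"
definition md :: "nat\<times>nat \<Rightarrow> nat\<times>nat \<Rightarrow> nat" where
 "md x y = dd (fst x) (fst y) + dd (snd x) (snd y)"

abbreviation GE where "GE \<equiv> box_E path_E path_E"

lemma GV_eq: "box_V (path_V m) (path_V n) = {0..<m} \<times> {0..<n}"
  by (simp add: box_V_def path_V_def)

lemma edge_md: "GE x y \<Longrightarrow> md x y = 1"
  by (cases x; cases y; auto simp: box_E_def path_E_def md_def dd_def)

lemma dd_tri: "dd a c \<le> dd a b + dd b c" unfolding dd_def by arith
lemma md_tri: "md x z \<le> md x y + md y z"
  unfolding md_def using dd_tri[of "fst x" "fst z" "fst y"] dd_tri[of "snd x" "snd z" "snd y"] by linarith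

lemma walk_cons: "is_walk V E (x # p) \<Longrightarrow> p \<noteq> [] \<Longrightarrow> is_walk V E p \<and> E x (hd p)"
  unfolding is_walk_def
proof (intro conjI allI impI)
  assume a: "x # p \<noteq> [] \<and> set (x # p) \<subseteq> V \<and> (\<forall>i. Suc i < length (x # p) \<longrightarrow> E ((x # p) ! i) ((x # p) ! Suc i))"
    and p: "p \<noteq> []"
  show "p \<noteq> []" by fact
  show "set p \<subseteq> V" using a by auto
  fix i assume "Suc i < length p"
  then show "E (p ! i) (p ! Suc i)" using a[THEN conjunct2, THEN conjunct2, rule_format, of "Suc i"] by simp
next
  assume a: "x # p \<noteq> [] \<and> set (x # p) \<subseteq> V \<and> (\<forall>i. Suc i < length (x # p) \<longrightarrow> E ((x # p) ! i) ((x # p) ! Suc i))"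
    and p: "p \<noteq> []"
  show "E x (hd p)" using a[THEN conjunct2, THEN conjunct2, rule_format, of 0] p
    by (cases p) auto
qed

lemma walk_lower: "is_walk V GE p \<Longrightarrow> md (hd p) (last p) \<le> length p - 1"
proof (induction p)
  case Nil then show ?case by (simp add: is_walk_def)
next
  case (Cons x p)
  show ?case
  proof (cases "p = []")
    case True then show ?thesis by (simp add: md_def dd_def)
  next
    case False
    have w: "is_walk V GE p" and e: "GE x (hd p)" using walk_cons[OF Cons.prems False] by auto
    have "md x (last p) \<le> md x (hd p) + md (hd p) (last p)" by (rule md_tri)
    also have "\<dots> \<le> 1 + (length p - 1)" using edge_md[OF e] Cons.IH[OF w] by simp
    finally show ?thesis using False by (cases p) auto
  qed
qed

lemma walk_exists:
  "x \<in> {0..<m} \<times> {0..<n} \<Longrightarrow> y \<in> {0..<m} \<times> {0..<n} \<Longrightarrow> md x y = d \<Longrightarrow>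
   \<exists>p. is_walk ({0..<m} \<times> {0..<n}) GE p \<and> hd p = x \<and> last p = y \<and> length p = Suc d"
proof (induction d arbitrary: x)
  case 0
  then have "x = y" by (cases x; cases y; auto simp: md_def dd_def)
  then show ?case using 0 by (intro exI[of _ "[x]"]) (auto simp: is_walk_def)
next
  case (Suc d)
  obtain a b where x: "x = (a,b)" by (cases x)
  obtain c e where y: "y = (c,e)" by (cases y)
  define x' where "x' = (if a < c then (a+1,b) else if c < a then (a - 1, b) else if b < e then (a, b+1) else (a, b - 1))"
  have x'V: "x' \<in> {0..<m} \<times> {0..<n}" and ex: "GE x x'" and mdx: "md x' y = d"
    using Suc.prems unfolding x y x'_def by (auto simp: md_def dd_def box_E_def path_E_def)
  obtain p where p: "is_walk ({0..<m} \<times> {0..<n}) GE p" "hd p = x'" "last p = y" "length p = Suc d"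
    using Suc.IH[OF x'V Suc.prems(2) mdx] by blast
  have "is_walk ({0..<m} \<times> {0..<n}) GE (x # p)"
    unfolding is_walk_def
  proof (intro conjI allI impI)
    show "x # p \<noteq> []" by simp
    show "set (x # p) \<subseteq> {0..<m} \<times> {0..<n}" using p(1) Suc.prems(1) by (auto simp: is_walk_def)
    fix i assume i: "Suc i < length (x # p)"
    show "GE ((x # p) ! i) ((x # p) ! Suc i)"
    proof (cases i)
      case 0 then show ?thesis using ex p(2,4) by (cases p) auto
    next
      case (Suc j) then show ?thesis using p(1) i by (auto simp: is_walk_def)
    qed
  qed
  then show ?case using p by (intro exI[of _ "x # p"]) auto
qed

lemma gdist_grid:
  assumes "x \<in> box_V (path_V m) (path_V n)" "y \<in> box_V (path_V m) (path_V n)"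
  shows "gdist (box_V (path_V m) (path_V n)) GE x y = md x y"
  unfolding gdist_def GV_eq
proof (rule Least_equality)
  show "\<exists>p. is_walk ({0..<m} \<times> {0..<n}) GE p \<and> hd p = x \<and> last p = y \<and> length p = Suc (md x y)"
    using walk_exists assms GV_eq by metis
next
  fix k assume "\<exists>p. is_walk ({0..<m} \<times> {0..<n}) GE p \<and> hd p = x \<and> last p = y \<and> length p = Suc k"
  then obtain p where "is_walk ({0..<m} \<times> {0..<n}) GE p" "hd p = x" "last p = y" "length p = Suc k" by blast
  then show "md x y \<le> k" using walk_lower by fastforce
qed


lemma fin_V: "finite (box_V (path_V m) (path_V n))" by (simp add: GV_eq)

lemma ecc_ge: "finite V \<Longrightarrow> w \<in> V \<Longrightarrow> gdist V E v w \<le> ecc V E v"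
  unfolding ecc_def by (rule Max_ge) auto

lemma ecc_le_diam: "finite V \<Longrightarrow> v \<in> V \<Longrightarrow> ecc V E v \<le> diam V E"
  unfolding diam_def by (rule Max_ge) auto

lemma bc_ok: "finite V \<Longrightarrow> (\<And>v. v \<in> V \<Longrightarrow> \<exists>w\<in>V. f v \<le> gdist V E v w) \<Longrightarrow> is_broadcast V E f"
  unfolding is_broadcast_def
  by (meson ecc_ge ecc_le_diam order_trans)

lemma ub_ge:
  assumes "finite V" "minimal_dominating_broadcast V E f"
  shows "bcost V f \<le> upper_broadcast_number V E"
proof -
  have "{bcost V f |f. minimal_dominating_broadcast V E f} \<subseteq> {..card V * diam V E}"
  proof
    fix x assume "x \<in> {bcost V f |f. minimal_dominating_broadcast V E f}"
    then obtain g where x: "x = bcost V g" and g: "minimal_dominating_broadcast V E g" by blast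
    have "\<forall>v\<in>V. g v \<le> diam V E" using g by (auto simp: minimal_dominating_broadcast_def is_broadcast_def)
    then have "sum g V \<le> card V * diam V E" using sum_bounded_above[of V g "diam V E"] by simp
    then show "x \<in> {..card V * diam V E}" using x by (simp add: bcost_def)
  qed
  then have "finite {bcost V f |f. minimal_dominating_broadcast V E f}" using finite_subset by blast
  then show ?thesis unfolding upper_broadcast_number_def by (rule Max_ge) (use assms in blast)
qed

lemma ub_le:
  assumes "finite V" "minimal_dominating_broadcast V E f0"
    "\<And>f. minimal_dominating_broadcast V E f \<Longrightarrow> bcost V f \<le> c"
  shows "upper_broadcast_number V E \<le> c"
proof -
  have "{bcost V f |f. minimal_dominating_broadcast V E f} \<subseteq> {..c}" using assms(3) by auto
  then have "finite {bcost V f |f. minimal_dominating_broadcast V E f}" using finite_subset by blast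
  then show ?thesis unfolding upper_broadcast_number_def using assms(2,3)
    by (subst Max_le_iff) auto
qed

lemma md_bound: "x \<in> {0..<m} \<times> {0..<n} \<Longrightarrow> y \<in> {0..<m} \<times> {0..<n} \<Longrightarrow> md x y \<le> (m - 1) + (n - 1)"
  by (cases x; cases y) (auto simp: md_def dd_def)

lemma diam_grid:
  assumes "1 \<le> m" "1 \<le> n"
  shows "diam (box_V (path_V m) (path_V n)) GE = (m - 1) + (n - 1)"
proof (rule antisym)
  let ?V = "box_V (path_V m) (path_V n)"
  have ne: "?V \<noteq> {}" using assms by (auto simp: GV_eq)
  have "ecc ?V GE v \<le> (m - 1) + (n - 1)" if v: "v \<in> ?V" for v
  proof -
    have "\<forall>w\<in>?V. gdist ?V GE v w \<le> (m - 1) + (n - 1)"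
      using v gdist_grid md_bound GV_eq by metis
    then show ?thesis unfolding ecc_def using ne fin_V by (subst Max_le_iff) auto
  qed
  then show "diam ?V GE \<le> (m - 1) + (n - 1)" unfolding diam_def using ne fin_V
    by (subst Max_le_iff) auto
next
  let ?V = "box_V (path_V m) (path_V n)"
  have a: "(0,0) \<in> ?V" "(m-1,n-1) \<in> ?V" using assms by (auto simp: GV_eq)
  have "(m - 1) + (n - 1) = gdist ?V GE (0,0) (m-1,n-1)" using gdist_grid[OF a] by (simp add: md_def dd_def)
  also have "\<dots> \<le> ecc ?V GE (0,0)" using ecc_ge[OF fin_V a(2)] .
  also have "\<dots> \<le> diam ?V GE" using ecc_le_diam[OF fin_V a(1)] .
  finally show "(m - 1) + (n - 1) \<le> diam ?V GE" .
qed


lemma ladder: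
  assumes n: "2 \<le> n"
  shows "minimal_dominating_broadcast (box_V (path_V 2) (path_V n)) GE
           (\<lambda>x. if x = (0,n-1) \<or> x = (1,n-1) then n-1 else 0)"
    and "bcost (box_V (path_V 2) (path_V n)) (\<lambda>x. if x = (0,n-1) \<or> x = (1,n-1) then n-1 else 0) = 2*(n-1)"
proof -
  let ?V = "box_V (path_V 2) (path_V n)"
  let ?f = "\<lambda>x::nat\<times>nat. if x = (0,n-1) \<or> x = (1,n-1) then n-1 else 0"
  have V: "?V = {0..<2} \<times> {0..<n}" by (rule GV_eq)
  have gd: "\<And>x y. x \<in> ?V \<Longrightarrow> y \<in> ?V \<Longrightarrow> gdist ?V GE x y = md x y" by (rule gdist_grid)
  have bc: "is_broadcast ?V GE ?f"
  proof (rule bc_ok[OF fin_V])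
    fix v assume v: "v \<in> ?V"
    obtain a b where ab: "v = (a,b)" by (cases v)
    show "\<exists>w\<in>?V. ?f v \<le> gdist ?V GE v w"
    proof (cases "v = (0,n-1) \<or> v = (1,n-1)")
      case True
      have w: "(1 - a, 0) \<in> ?V" using v ab V by auto
      have "?f v \<le> md v (1 - a, 0)" using True ab by (auto simp: md_def dd_def)
      then have "?f v \<le> gdist ?V GE v (1 - a, 0)" using gd[OF v w] by simp
      then show ?thesis using w by blast
    next
      case False then show ?thesis using v by (intro bexI[of _ v]) auto
    qed
  qed
  have dm: "dominating ?V GE ?f"
    unfolding dominating_def
  proof
    fix u assume u: "u \<in> ?V"
    obtain a b where ab: "u = (a,b)" by (cases u)
    have w: "(a, n-1) \<in> ?V" and a: "a = 0 \<or> a = 1" and b: "b < n" using u ab V n by auto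
    have "?f (a,n-1) = n - 1" using a by auto
    moreover have "md u (a,n-1) \<le> n - 1" using ab b by (auto simp: md_def dd_def)
    ultimately show "\<exists>v\<in>?V. 1 \<le> ?f v \<and> gdist ?V GE u v \<le> ?f v"
      using gd[OF u w] w n by (intro bexI[of _ "(a,n-1)"]) auto
  qed
  have mn: "\<forall>v\<in>?V. \<forall>k < ?f v. \<not> dominating ?V GE (?f(v := k))"
  proof (intro ballI allI impI)
    fix v k assume v: "v \<in> ?V" and k: "k < ?f v"
    then have vv: "v = (0,n-1) \<or> v = (1,n-1)" by (auto split: if_splits)
    have kn: "k < n - 1" using k vv by auto
    define u where "u = (if v = (0,n-1) then (0::nat,0::nat) else (1,0))"
    have uV: "u \<in> ?V" using V n unfolding u_def by auto
    show "\<not> dominating ?V GE (?f(v := k))"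
    proof
      assume "dominating ?V GE (?f(v := k))"
      then obtain w where w: "w \<in> ?V" "1 \<le> (?f(v := k)) w" "gdist ?V GE u w \<le> (?f(v := k)) w"
        unfolding dominating_def using uV by blast
      have w2: "md u w \<le> (?f(v := k)) w" using w(3) gd[OF uV w(1)] by simp
      have "w = v \<or> w = (0,n-1) \<or> w = (1,n-1)" using w(2) by (auto split: if_splits)
      then show False using w2 vv kn n unfolding u_def by (auto simp: md_def dd_def split: if_splits)
    qed
  qed
  show "minimal_dominating_broadcast ?V GE ?f" unfolding minimal_dominating_broadcast_def using bc dm mn by blast
  have "bcost ?V ?f = sum ?f {(0,n-1),(1,n-1)}"
    unfolding bcost_def by (rule sum.mono_neutral_right[of "?V" "{(0,n-1),(1,n-1)}" ?f]) (use V n in auto)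
  also have "\<dots> = 2*(n-1)" by simp
  finally show "bcost ?V ?f = 2*(n-1)" .
qed


lemma md1_parity: "md v w \<le> 1 \<Longrightarrow> v \<noteq> w \<Longrightarrow> even (fst v + snd v) \<Longrightarrow> even (fst w + snd w) \<Longrightarrow> False"
proof -
  assume a: "md v w \<le> 1" "v \<noteq> w" "even (fst v + snd v)" "even (fst w + snd w)"
  obtain a b c d where v: "v = (a,b)" and w: "w = (c,d)" by (cases v; cases w)
  have "(a = c \<and> (b = d + 1 \<or> d = b + 1)) \<or> (b = d \<and> (a = c + 1 \<or> c = a + 1))"
    using a(1,2) unfolding v w md_def dd_def by auto
  then show False using a(3,4) unfolding v w by auto
qed

lemma checker:
  assumes m: "2 \<le> m" and n: "1 \<le> n"
  shows "minimal_dominating_broadcast (box_V (path_V m) (path_V n)) GE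
           (\<lambda>x::nat\<times>nat. if even (fst x + snd x) then 1 else 0)"
proof -
  let ?V = "box_V (path_V m) (path_V n)"
  let ?f = "\<lambda>x::nat\<times>nat. if even (fst x + snd x) then (1::nat) else 0"
  have V: "?V = {0..<m} \<times> {0..<n}" by (rule GV_eq)
  have gd: "\<And>x y. x \<in> ?V \<Longrightarrow> y \<in> ?V \<Longrightarrow> gdist ?V GE x y = md x y" by (rule gdist_grid)
  have bc: "is_broadcast ?V GE ?f"
  proof (rule bc_ok[OF fin_V])
    fix v assume v: "v \<in> ?V"
    obtain a b where ab: "v = (a,b)" by (cases v)
    define w where "w = (if a = 0 then 1 else 0::nat, b)"
    have w: "w \<in> ?V" using v ab V m unfolding w_def by auto
    have "?f v \<le> md v w" using ab unfolding w_def by (auto simp: md_def dd_def)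
    then have "?f v \<le> gdist ?V GE v w" using gd[OF v w] by simp
    then show "\<exists>w\<in>?V. ?f v \<le> gdist ?V GE v w" using w by blast
  qed
  have dm: "dominating ?V GE ?f"
    unfolding dominating_def
  proof
    fix u assume u: "u \<in> ?V"
    obtain a b where ab: "u = (a,b)" by (cases u)
    show "\<exists>v\<in>?V. 1 \<le> ?f v \<and> gdist ?V GE u v \<le> ?f v"
    proof (cases "even (a + b)")
      case True
      then show ?thesis using u ab gd[OF u u] by (intro bexI[of _ u]) (auto simp: md_def dd_def)
    next
      case False
      define v where "v = (if a = 0 then 1 else a - 1, b)"
      have vV: "v \<in> ?V" using u ab V m unfolding v_def by auto
      have ev: "even (fst v + snd v)" using False unfolding v_def by (cases a) auto
      have "md u v \<le> 1" using ab unfolding v_def by (auto simp: md_def dd_def)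
      then show ?thesis using gd[OF u vV] vV ev by (intro bexI[of _ v]) auto
    qed
  qed
  have mn: "\<forall>v\<in>?V. \<forall>k < ?f v. \<not> dominating ?V GE (?f(v := k))"
  proof (intro ballI allI impI)
    fix v k assume v: "v \<in> ?V" and k: "k < ?f v"
    then have ev: "even (fst v + snd v)" and k0: "k = 0" by (auto split: if_splits)
    show "\<not> dominating ?V GE (?f(v := k))"
    proof
      assume "dominating ?V GE (?f(v := k))"
      then obtain w where w: "w \<in> ?V" "1 \<le> (?f(v := k)) w" "gdist ?V GE v w \<le> (?f(v := k)) w"
        unfolding dominating_def using v by blast
      have wv: "w \<noteq> v" using w(2) k0 by auto
      have ew: "even (fst w + snd w)" using w(2) wv by (auto split: if_splits)
      have "md v w \<le> 1" using w(3) gd[OF v w(1)] wv ew by simp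
      then show False using md1_parity wv ev ew by metis
    qed
  qed
  show ?thesis unfolding minimal_dominating_broadcast_def using bc dm mn by blast
qed


definition grow :: "nat \<Rightarrow> nat \<Rightarrow> nat" where
  "grow n i = (\<Sum>j<n. if even (i + j) then 1 else 0)"

lemma grow_pair: "grow n i + grow n (Suc i) = n"
proof -
  have "grow n i + grow n (Suc i) = (\<Sum>j<n. (if even (i + j) then 1 else 0) + (if even (Suc i + j) then 1 else 0))"
    unfolding grow_def by (simp add: sum.distrib)
  also have "\<dots> = (\<Sum>j<n. (1::nat))" by (rule sum.cong) auto
  finally show ?thesis by simp
qed

lemma grow_2: "grow n (Suc (Suc i)) = grow n i"
  unfolding grow_def by simp

lemma grow_0: "3 \<le> n \<Longrightarrow> 2 \<le> grow n 0"
proof -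
  assume n: "3 \<le> n"
  have "(\<Sum>j\<in>{0,2::nat}. if even (0 + j) then 1 else 0) \<le> (\<Sum>j<n. if even (0 + j) then 1 else (0::nat))"
    by (rule sum_mono2) (use n in auto)
  then show ?thesis unfolding grow_def by simp
qed

lemma checker_cost:
  assumes m: "3 \<le> m" and mn: "m \<le> n"
  shows "(m - 1) + (n - 1) < bcost (box_V (path_V m) (path_V n)) (\<lambda>x::nat\<times>nat. if even (fst x + snd x) then 1 else 0)"
proof -
  have "bcost (box_V (path_V m) (path_V n)) (\<lambda>x::nat\<times>nat. if even (fst x + snd x) then 1 else 0)
      = (\<Sum>i\<in>{0..<m}. \<Sum>j\<in>{0..<n}. if even (i + j) then 1 else 0)"
    unfolding bcost_def GV_eq by (simp add: sum.cartesian_product case_prod_beta)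
  also have "\<dots> = (\<Sum>i<m. grow n i)" unfolding grow_def by (simp add: atLeast0LessThan)
  finally have c: "bcost (box_V (path_V m) (path_V n)) (\<lambda>x::nat\<times>nat. if even (fst x + snd x) then 1 else 0) = (\<Sum>i<m. grow n i)" .
  show ?thesis
  proof (cases "m = 3")
    case True
    have "(\<Sum>i<m. grow n i) = grow n 0 + grow n 1 + grow n 2"
      using True by (simp add: numeral_3_eq_3 numeral_2_eq_2)
    also have "\<dots> = n + grow n 0" using grow_pair[of n 0] grow_2[of n 0] by (simp add: numeral_2_eq_2)
    finally show ?thesis using c grow_0[of n] True mn by simp
  next
    case False
    have "(\<Sum>i<4. grow n i) \<le> (\<Sum>i<m. grow n i)" by (rule sum_mono2) (use m False in auto)
    moreover have "(\<Sum>i<4. grow n i) = grow n 0 + grow n 1 + (grow n 2 + grow n 3)"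
      by (simp add: eval_nat_numeral)
    moreover have "grow n 0 + grow n 1 = n" "grow n 2 + grow n 3 = n"
      using grow_pair[of n 0] grow_pair[of n 2] by (simp_all add: eval_nat_numeral)
    ultimately show ?thesis using c m mn by simp
  qed
qed



definition P4 :: "nat \<Rightarrow> nat \<Rightarrow> nat \<Rightarrow> nat \<Rightarrow> bool" where
  "P4 a b c d \<longleftrightarrow> (1 \<le> a \<or> 1 \<le> b \<or> 1 \<le> c \<or> 2 \<le> d) \<and> (1 \<le> b \<or> 1 \<le> a \<or> 1 \<le> d \<or> 2 \<le> c)
     \<and> (1 \<le> c \<or> 1 \<le> a \<or> 1 \<le> d \<or> 2 \<le> b) \<and> (1 \<le> d \<or> 1 \<le> b \<or> 1 \<le> c \<or> 2 \<le> a)"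

lemma V4: "box_V (path_V 2) (path_V 2) = {(0,0),(0,1),(1,0),(1,1)}"
  unfolding GV_eq by (auto simp: eval_nat_numeral less_Suc_eq)

lemma c4_dom: "dominating (box_V (path_V 2) (path_V 2)) GE g \<longleftrightarrow> P4 (g (0,0)) (g (0,1)) (g (1,0)) (g (1,1))"
proof -
  have gd: "\<And>x y. x \<in> box_V (path_V 2) (path_V 2) \<Longrightarrow> y \<in> box_V (path_V 2) (path_V 2) \<Longrightarrow>
     gdist (box_V (path_V 2) (path_V 2)) GE x y = md x y" by (rule gdist_grid)
  show ?thesis unfolding dominating_def using gd unfolding V4
    by (simp add: md_def dd_def P4_def) (auto simp: eval_nat_numeral)
qed

lemma le2: "x \<le> (2::nat) \<Longrightarrow> x = 0 \<or> x = 1 \<or> x = 2" by arith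

lemma P4_bash:
  "a \<le> 2 \<Longrightarrow> b \<le> 2 \<Longrightarrow> c \<le> 2 \<Longrightarrow> d \<le> 2 \<Longrightarrow> P4 a b c d \<Longrightarrow>
    (0 < a \<Longrightarrow> \<not> P4 (a - 1) b c d) \<Longrightarrow> (0 < b \<Longrightarrow> \<not> P4 a (b - 1) c d) \<Longrightarrow>
    (0 < c \<Longrightarrow> \<not> P4 a b (c - 1) d) \<Longrightarrow> (0 < d \<Longrightarrow> \<not> P4 a b c (d - 1)) \<Longrightarrow>
   a + b + c + d \<le> 2"
  apply (subgoal_tac "(a = 0 \<or> a = 1 \<or> a = 2) \<and> (b = 0 \<or> b = 1 \<or> b = 2) \<and> (c = 0 \<or> c = 1 \<or> c = 2) \<and> (d = 0 \<or> d = 1 \<or> d = 2)")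
   apply (elim conjE disjE)
  apply (simp_all add: P4_def)
  apply (metis le2 One_nat_def)
  done

lemma c4_bound:
  assumes f: "minimal_dominating_broadcast (box_V (path_V 2) (path_V 2)) GE f"
  shows "bcost (box_V (path_V 2) (path_V 2)) f \<le> 2"
proof -
  let ?V = "box_V (path_V 2) (path_V 2)"
  have dm: "diam ?V GE = 2" using diam_grid[of 2 2] by simp
  have le: "\<And>v. v \<in> ?V \<Longrightarrow> f v \<le> 2" using f dm by (auto simp: minimal_dominating_broadcast_def is_broadcast_def)
  have mem: "(0,0) \<in> ?V" "(0,1) \<in> ?V" "(1,0) \<in> ?V" "(1,1) \<in> ?V" unfolding V4 by auto
  have P: "P4 (f (0,0)) (f (0,1)) (f (1,0)) (f (1,1))" using f c4_dom by (auto simp: minimal_dominating_broadcast_def)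
  have mn: "\<And>v. v \<in> ?V \<Longrightarrow> 0 < f v \<Longrightarrow> \<not> dominating ?V GE (f(v := f v - 1))"
    using f unfolding minimal_dominating_broadcast_def by auto
  have "f (0,0) + f (0,1) + f (1,0) + f (1,1) \<le> 2"
  proof (rule P4_bash[OF le[OF mem(1)] le[OF mem(2)] le[OF mem(3)] le[OF mem(4)] P])
    show "0 < f (0,0) \<Longrightarrow> \<not> P4 (f (0,0) - 1) (f (0,1)) (f (1,0)) (f (1,1))"
      using mn[OF mem(1)] unfolding c4_dom by simp
    show "0 < f (0,1) \<Longrightarrow> \<not> P4 (f (0,0)) (f (0,1) - 1) (f (1,0)) (f (1,1))"
      using mn[OF mem(2)] unfolding c4_dom by simp
    show "0 < f (1,0) \<Longrightarrow> \<not> P4 (f (0,0)) (f (0,1)) (f (1,0) - 1) (f (1,1))"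
      using mn[OF mem(3)] unfolding c4_dom by simp
    show "0 < f (1,1) \<Longrightarrow> \<not> P4 (f (0,0)) (f (0,1)) (f (1,0)) (f (1,1) - 1)"
      using mn[OF mem(4)] unfolding c4_dom by simp
  qed
  moreover have "bcost ?V f = f (0,0) + f (0,1) + f (1,0) + f (1,1)"
    unfolding bcost_def V4 by simp
  ultimately show ?thesis by simp
qed


theorem mainTheorem14:
  fixes m n :: nat
  assumes "2 \<le> m" and "m \<le> n"
  shows "diametrical (box_V (path_V m) (path_V n)) (box_E path_E path_E) \<longleftrightarrow> m = 2 \<and> n = 2"
proof
  let ?V = "box_V (path_V m) (path_V n)"
  have dm: "diam ?V GE = (m - 1) + (n - 1)" using diam_grid assms by simp
  assume d: "diametrical ?V GE"
  have ub: "upper_broadcast_number ?V GE \<le> (m - 1) + (n - 1)" using d dm by (simp add: diametrical_def)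
  show "m = 2 \<and> n = 2"
  proof (rule ccontr)
    assume ne: "\<not> (m = 2 \<and> n = 2)"
    show False
    proof (cases "m = 2")
      case True
      then have n3: "3 \<le> n" using ne assms by simp
      have "bcost (box_V (path_V 2) (path_V n)) (\<lambda>x. if x = (0,n-1) \<or> x = (1,n-1) then n-1 else 0)
          \<le> upper_broadcast_number (box_V (path_V 2) (path_V n)) GE"
        using ub_ge[OF fin_V ladder(1)] n3 by simp
      then have "2*(n-1) \<le> upper_broadcast_number (box_V (path_V 2) (path_V n)) GE"
        using ladder(2) n3 by simp
      then show False using ub True n3 by simp
    next
      case False
      then have m3: "3 \<le> m" using assms by simp
      have "bcost ?V (\<lambda>x::nat\<times>nat. if even (fst x + snd x) then 1 else 0) \<le> upper_broadcast_number ?V GE"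
        using ub_ge[OF fin_V checker] assms by simp
      then show False using checker_cost[OF m3 assms(2)] ub by simp
    qed
  qed
next
  assume mn: "m = 2 \<and> n = 2"
  have l: "minimal_dominating_broadcast (box_V (path_V 2) (path_V 2)) GE
           (\<lambda>x. if x = (0,2-1) \<or> x = (1,2-1) then 2-1 else 0)" using ladder(1)[of 2] by simp
  have "upper_broadcast_number (box_V (path_V 2) (path_V 2)) GE \<le> 2"
    by (rule ub_le[OF fin_V l c4_bound])
  moreover have "bcost (box_V (path_V 2) (path_V 2)) (\<lambda>x. if x = (0,2-1) \<or> x = (1,2-1) then 2-1 else 0)
       \<le> upper_broadcast_number (box_V (path_V 2) (path_V 2)) GE"
    by (rule ub_ge[OF fin_V l])
  moreover have "bcost (box_V (path_V 2) (path_V 2)) (\<lambda>x. if x = (0,2-1) \<or> x = (1,2-1) then 2-1 else 0) = 2"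
    using ladder(2)[of 2] by simp
  moreover have "diam (box_V (path_V 2) (path_V 2)) GE = 2" using diam_grid[of 2 2] by simp
  ultimately show "diametrical (box_V (path_V m) (path_V n)) (box_E path_E path_E)" using mn by (simp add: diametrical_def)
qed

thm_deps mainTheorem14

end
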